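(* Let $G$ be a group, $X$ a $G$-bornological coarse space and $A,B$ invariant subsets of $X$ with $A\cup B=X$. Assume that the square of inclusions $$\begin{array}{ccc}A\cap B&\to&A\\ \downarrow&&\downarrow\\ B&\to&X\end{array}$$ (all subsets with the induced structures) is a push-out in the category $G\mathbf{BC}$ of $G$-bornological coarse spaces, that $A$ and $A\cap B$ are nice in $X$, and that $V[A]\cap B$ is nice in $X$ for a cofinal family of invariant coarse entourages $V$ of $X$. Then the pair $(A,B)$ is coarsely excisive.
   Context: A bornological coarse space is a set with a coarse structure (entourages containing the diagonal, closed under subsets, finite unions, inverses and composition) and a compatible bornology ($U[B]$ bounded for entourages $U$ and bounded $B$); morphisms are controlled and proper maps. A $G$-bornological coarse space is one with an action of $G$ by automorphisms such that the invariant entourages are cofinal in the coarse structure. For an entourage $U$ and a subset $C$, $U[C]=\{x\mid \exists c\in C: (x,c)\in U\}$. A subset $C$ of $X$ is nice if for every invariant coarse entourage $U$ of $X$ containing the diagonal the inclusion $C\to U[C]$ (induced structures) is a coarse equivalence. A pair $(A,B)$ of invariant subsets with $A\cup B=X$ is coarsely excisive if $A$ and $A\cap B$ are nice in $X$, $V[A]\cap B$ is nice in $X$ for a cofinal family of invariant entourages $V$ of $X$, and for every coarse entourage $U$ of $X$ there exists a coarse entourage $V$ with $U[A]\cap U[B]\subseteq V[A\cap B]$. *)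

theory Defs
  imports "HOL-Algebra.Group"
begin

record 'a bcs =
  pts  :: "'a set"
  ents :: "('a \<times> 'a) set set"
  bdd  :: "'a set set"

definition ent_img :: "('a \<times> 'a) set \<Rightarrow> 'a set \<Rightarrow> 'a set" where
  "ent_img U C = {x. \<exists>c\<in>C. (x, c) \<in> U}"

definition coarse_structure :: "'a set \<Rightarrow> ('a \<times> 'a) set set \<Rightarrow> bool" where
  "coarse_structure S E \<longleftrightarrow>
     (\<forall>U\<in>E. U \<subseteq> S \<times> S) \<and>
     Id_on S \<in> E \<and>
     (\<forall>U\<in>E. \<forall>V. V \<subseteq> U \<longrightarrow> V \<in> E) \<and>
     (\<forall>U\<in>E. \<forall>V\<in>E. U \<union> V \<in> E) \<and>
     (\<forall>U\<in>E. converse U \<in> E) \<and>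
     (\<forall>U\<in>E. \<forall>V\<in>E. U O V \<in> E)"

definition bornology :: "'a set \<Rightarrow> 'a set set \<Rightarrow> bool" where
  "bornology S \<B> \<longleftrightarrow>
     (\<forall>B\<in>\<B>. B \<subseteq> S) \<and>
     (\<forall>x\<in>S. \<exists>B\<in>\<B>. x \<in> B) \<and>
     (\<forall>B\<in>\<B>. \<forall>B'. B' \<subseteq> B \<longrightarrow> B' \<in> \<B>) \<and>
     (\<forall>B\<in>\<B>. \<forall>B'\<in>\<B>. B \<union> B' \<in> \<B>)"

definition bornological_coarse :: "'a bcs \<Rightarrow> bool" where
  "bornological_coarse X \<longleftrightarrow>
     coarse_structure (pts X) (ents X) \<and> bornology (pts X) (bdd X) \<and>
     (\<forall>U\<in>ents X. \<forall>B\<in>bdd X. ent_img U B \<in> bdd X)"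

definition controlled :: "'a bcs \<Rightarrow> 'b bcs \<Rightarrow> ('a \<Rightarrow> 'b) \<Rightarrow> bool" where
  "controlled X Y f \<longleftrightarrow> (\<forall>U\<in>ents X. (\<lambda>(x, y). (f x, f y)) ` U \<in> ents Y)"

definition proper :: "'a bcs \<Rightarrow> 'b bcs \<Rightarrow> ('a \<Rightarrow> 'b) \<Rightarrow> bool" where
  "proper X Y f \<longleftrightarrow> (\<forall>B\<in>bdd Y. {x\<in>pts X. f x \<in> B} \<in> bdd X)"

definition bc_morphism :: "'a bcs \<Rightarrow> 'b bcs \<Rightarrow> ('a \<Rightarrow> 'b) \<Rightarrow> bool" where
  "bc_morphism X Y f \<longleftrightarrow> f \<in> pts X \<rightarrow> pts Y \<and> controlled X Y f \<and> proper X Y f"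

definition bc_automorphism :: "'a bcs \<Rightarrow> ('a \<Rightarrow> 'a) \<Rightarrow> bool" where
  "bc_automorphism X f \<longleftrightarrow> bc_morphism X X f \<and>
     (\<exists>h. bc_morphism X X h \<and> (\<forall>x\<in>pts X. h (f x) = x \<and> f (h x) = x))"

definition invariant_set :: "('g, 'm) monoid_scheme \<Rightarrow> ('g \<Rightarrow> 'a \<Rightarrow> 'a) \<Rightarrow> 'a set \<Rightarrow> bool" where
  "invariant_set G \<phi> S \<longleftrightarrow> (\<forall>g\<in>carrier G. \<forall>x\<in>S. \<phi> g x \<in> S)"

definition invariant_ent ::
  "('g, 'm) monoid_scheme \<Rightarrow> ('g \<Rightarrow> 'a \<Rightarrow> 'a) \<Rightarrow> ('a \<times> 'a) set \<Rightarrow> bool" where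
  "invariant_ent G \<phi> U \<longleftrightarrow> (\<forall>g\<in>carrier G. \<forall>(x, y)\<in>U. (\<phi> g x, \<phi> g y) \<in> U)"

definition G_bc_space :: "('g, 'm) monoid_scheme \<Rightarrow> ('g \<Rightarrow> 'a \<Rightarrow> 'a) \<Rightarrow> 'a bcs \<Rightarrow> bool" where
  "G_bc_space G \<phi> X \<longleftrightarrow>
     group G \<and> bornological_coarse X \<and>
     (\<forall>x\<in>pts X. \<phi> \<one>\<^bsub>G\<^esub> x = x) \<and>
     (\<forall>g\<in>carrier G. \<forall>h\<in>carrier G. \<forall>x\<in>pts X. \<phi> (g \<otimes>\<^bsub>G\<^esub> h) x = \<phi> g (\<phi> h x)) \<and>
     (\<forall>g\<in>carrier G. bc_automorphism X (\<phi> g)) \<and>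
     (\<forall>U\<in>ents X. \<exists>V\<in>ents X. invariant_ent G \<phi> V \<and> U \<subseteq> V)"

definition equivariant ::
  "('g, 'm) monoid_scheme \<Rightarrow> ('g \<Rightarrow> 'a \<Rightarrow> 'a) \<Rightarrow> ('g \<Rightarrow> 'b \<Rightarrow> 'b) \<Rightarrow> 'a set \<Rightarrow> ('a \<Rightarrow> 'b) \<Rightarrow> bool" where
  "equivariant G \<phi> \<psi> S f \<longleftrightarrow> (\<forall>g\<in>carrier G. \<forall>x\<in>S. f (\<phi> g x) = \<psi> g (f x))"

definition G_morphism ::
  "('g, 'm) monoid_scheme \<Rightarrow> ('g \<Rightarrow> 'a \<Rightarrow> 'a) \<Rightarrow> 'a bcs \<Rightarrow> ('g \<Rightarrow> 'b \<Rightarrow> 'b) \<Rightarrow> 'b bcs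
     \<Rightarrow> ('a \<Rightarrow> 'b) \<Rightarrow> bool" where
  "G_morphism G \<phi> X \<psi> Y f \<longleftrightarrow> bc_morphism X Y f \<and> equivariant G \<phi> \<psi> (pts X) f"

definition induced :: "'a bcs \<Rightarrow> 'a set \<Rightarrow> 'a bcs" where
  "induced X Y = \<lparr>pts = Y, ents = {U \<inter> (Y \<times> Y) | U. U \<in> ents X},
                  bdd = {B \<inter> Y | B. B \<in> bdd X}\<rparr>"

definition close :: "'a bcs \<Rightarrow> 'b bcs \<Rightarrow> ('a \<Rightarrow> 'b) \<Rightarrow> ('a \<Rightarrow> 'b) \<Rightarrow> bool" where
  "close X Y f g \<longleftrightarrow> (\<lambda>x. (f x, g x)) ` pts X \<in> ents Y"

definition G_coarse_equivalence ::
  "('g, 'm) monoid_scheme \<Rightarrow> ('g \<Rightarrow> 'a \<Rightarrow> 'a) \<Rightarrow> 'a bcs \<Rightarrow> ('g \<Rightarrow> 'b \<Rightarrow> 'b) \<Rightarrow> 'b bcs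
     \<Rightarrow> ('a \<Rightarrow> 'b) \<Rightarrow> bool" where
  "G_coarse_equivalence G \<phi> X \<psi> Y f \<longleftrightarrow> G_morphism G \<phi> X \<psi> Y f \<and>
     (\<exists>h. G_morphism G \<psi> Y \<phi> X h \<and> close X X (h \<circ> f) id \<and> close Y Y (f \<circ> h) id)"

definition nice :: "('g, 'm) monoid_scheme \<Rightarrow> ('g \<Rightarrow> 'a \<Rightarrow> 'a) \<Rightarrow> 'a bcs \<Rightarrow> 'a set \<Rightarrow> bool" where
  "nice G \<phi> X C \<longleftrightarrow>
     (\<forall>U\<in>ents X. invariant_ent G \<phi> U \<and> Id_on (pts X) \<subseteq> U \<longrightarrow>
        G_coarse_equivalence G \<phi> (induced X C) \<phi> (induced X (ent_img U C)) id)"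

definition cofinally_nice ::
  "('g, 'm) monoid_scheme \<Rightarrow> ('g \<Rightarrow> 'a \<Rightarrow> 'a) \<Rightarrow> 'a bcs \<Rightarrow> 'a set \<Rightarrow> 'a set \<Rightarrow> bool" where
  "cofinally_nice G \<phi> X A B \<longleftrightarrow>
     (\<exists>F. F \<subseteq> ents X \<and> (\<forall>V\<in>F. invariant_ent G \<phi> V) \<and>
          (\<forall>U\<in>ents X. \<exists>V\<in>F. U \<subseteq> V) \<and>
          (\<forall>V\<in>F. nice G \<phi> X (ent_img V A \<inter> B)))"

definition coarsely_excisive ::
  "('g, 'm) monoid_scheme \<Rightarrow> ('g \<Rightarrow> 'a \<Rightarrow> 'a) \<Rightarrow> 'a bcs \<Rightarrow> 'a set \<Rightarrow> 'a set \<Rightarrow> bool" where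
  "coarsely_excisive G \<phi> X A B \<longleftrightarrow>
     invariant_set G \<phi> A \<and> invariant_set G \<phi> B \<and> A \<union> B = pts X \<and>
     nice G \<phi> X A \<and> nice G \<phi> X (A \<inter> B) \<and> cofinally_nice G \<phi> X A B \<and>
     (\<forall>U\<in>ents X. \<exists>V\<in>ents X. ent_img U A \<inter> ent_img U B \<subseteq> ent_img V (A \<inter> B))"

text \<open>Test objects Z range over G-bornological coarse spaces on the carrier type of X
  (this is equivalent to arbitrary test objects).\<close>
definition is_pushout_GBC ::
  "('g, 'm) monoid_scheme \<Rightarrow> ('g \<Rightarrow> 'a \<Rightarrow> 'a) \<Rightarrow> 'a bcs \<Rightarrow> 'a set \<Rightarrow> 'a set \<Rightarrow> bool" where
  "is_pushout_GBC G \<phi> X A B \<longleftrightarrow>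
     (\<forall>(Z :: 'a bcs) (\<psi> :: 'g \<Rightarrow> 'a \<Rightarrow> 'a) f g.
        G_bc_space G \<psi> Z \<and>
        G_morphism G \<phi> (induced X A) \<psi> Z f \<and>
        G_morphism G \<phi> (induced X B) \<psi> Z g \<and>
        (\<forall>x\<in>A \<inter> B. f x = g x) \<longrightarrow>
        (\<exists>h. G_morphism G \<phi> X \<psi> Z h \<and> (\<forall>x\<in>A. h x = f x) \<and> (\<forall>x\<in>B. h x = g x)) \<and>
        (\<forall>h h'. G_morphism G \<phi> X \<psi> Z h \<and> (\<forall>x\<in>A. h x = f x) \<and> (\<forall>x\<in>B. h x = g x) \<and>
                G_morphism G \<phi> X \<psi> Z h' \<and> (\<forall>x\<in>A. h' x = f x) \<and> (\<forall>x\<in>B. h' x = g x)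
                \<longrightarrow> (\<forall>x\<in>pts X. h x = h' x)))"

end

theory Submission
  imports Defs
begin

definition exc :: "'a set \<Rightarrow> 'a set \<Rightarrow> ('a \<times> 'a) set \<Rightarrow> ('a \<times> 'a) set \<Rightarrow> bool" where
  "exc A B V W \<longleftrightarrow> (\<forall>x y. (x,y) \<in> V \<longrightarrow> (x \<in> A \<and> y \<in> B \<or> x \<in> B \<and> y \<in> A) \<longrightarrow> (\<exists>c\<in>A \<inter> B. (x,c) \<in> W))"

lemma exc_comp:
  assumes "exc A B V1 W1" "exc A B V2 W2" "V1 \<subseteq> (A \<union> B) \<times> (A \<union> B)"
  shows "exc A B (V1 O V2) (W1 \<union> V1 O W2)"
  unfolding exc_def
proof (intro allI impI)
  fix x z assume xz: "(x,z) \<in> V1 O V2" and c: "x \<in> A \<and> z \<in> B \<or> x \<in> B \<and> z \<in> A"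
  then obtain y where y1: "(x,y) \<in> V1" and y2: "(y,z) \<in> V2" by blast
  have "y \<in> A \<union> B" using y1 assms(3) by blast
  show "\<exists>c\<in>A \<inter> B. (x, c) \<in> W1 \<union> V1 O W2"
  proof (cases "(x \<in> A \<and> y \<in> B \<or> x \<in> B \<and> y \<in> A)")
    case True
    then show ?thesis using assms(1) y1 unfolding exc_def by blast
  next
    case False
    then have "y \<in> A \<and> z \<in> B \<or> y \<in> B \<and> z \<in> A" using c \<open>y \<in> A \<union> B\<close> by blast
    then obtain c where "c \<in> A \<inter> B" "(y,c) \<in> W2" using assms(2) y2 unfolding exc_def by blast
    then show ?thesis using y1 by blast
  qed
qed

lemma exc_conv:
  assumes "exc A B V W"
  shows "exc A B (converse V) (converse V O W)"
  using assms unfolding exc_def by blast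

lemma exc_un:
  assumes "exc A B V1 W1" "exc A B V2 W2"
  shows "exc A B (V1 \<union> V2) (W1 \<union> W2)"
  using assms unfolding exc_def by blast

theorem lemma3p7:
  fixes G :: "('g, 'm) monoid_scheme" and \<phi> :: "'g \<Rightarrow> 'a \<Rightarrow> 'a"
    and X :: "'a bcs" and A B :: "'a set"
  assumes "G_bc_space G \<phi> X"
    and "A \<subseteq> pts X" and "B \<subseteq> pts X"
    and "invariant_set G \<phi> A" and "invariant_set G \<phi> B"
    and "A \<union> B = pts X"
    and "is_pushout_GBC G \<phi> X A B"
    and "nice G \<phi> X A" and "nice G \<phi> X (A \<inter> B)"
    and "cofinally_nice G \<phi> X A B"
  shows "coarsely_excisive G \<phi> X A B"
proof -
  note GX = assms(1)[unfolded G_bc_space_def]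
  have grp: "group G" using GX by blast
  have cs: "coarse_structure (pts X) (ents X)" using GX unfolding bornological_coarse_def by blast
  note csd = cs[unfolded coarse_structure_def]
  have bornX: "bornology (pts X) (bdd X)" using GX unfolding bornological_coarse_def by blast
  have compatX: "\<forall>U\<in>ents X. \<forall>B\<in>bdd X. ent_img U B \<in> bdd X" using GX unfolding bornological_coarse_def by blast
  have act1: "\<forall>x\<in>pts X. \<phi> \<one>\<^bsub>G\<^esub> x = x" using GX by blast
  have actm: "\<forall>g\<in>carrier G. \<forall>h\<in>carrier G. \<forall>x\<in>pts X. \<phi> (g \<otimes>\<^bsub>G\<^esub> h) x = \<phi> g (\<phi> h x)" using GX by blast
  have cof: "\<forall>U\<in>ents X. \<exists>V\<in>ents X. invariant_ent G \<phi> V \<and> U \<subseteq> V" using GX by blast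
  have maps: "\<And>g x. g \<in> carrier G \<Longrightarrow> x \<in> pts X \<Longrightarrow> \<phi> g x \<in> pts X"
    using GX unfolding bc_automorphism_def bc_morphism_def by blast
  define E' where "E' = {V. \<exists>V'\<in>ents X. invariant_ent G \<phi> V' \<and> V \<subseteq> V' \<and> (\<exists>W\<in>ents X. exc A B V' W)}"
  define Z where "Z = \<lparr>pts = pts X, ents = E', bdd = bdd X\<rparr>"
  have E'sub: "E' \<subseteq> ents X" unfolding E'_def using csd by blast
  have IdX: "Id_on (pts X) \<in> ents X" using csd by blast
  have Idinv: "invariant_ent G \<phi> (Id_on (pts X))" unfolding invariant_ent_def using maps by auto
  have csZ: "coarse_structure (pts X) E'"
    unfolding coarse_structure_def
  proof (intro conjI)
    show "\<forall>U\<in>E'. U \<subseteq> pts X \<times> pts X" using E'sub csd by blast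
    show "Id_on (pts X) \<in> E'" unfolding E'_def
    proof -
      have "exc A B (Id_on (pts X)) (Id_on (pts X))" using assms(6) unfolding exc_def by auto
      then show "Id_on (pts X) \<in> {V. \<exists>V'\<in>ents X. invariant_ent G \<phi> V' \<and> V \<subseteq> V' \<and> (\<exists>W\<in>ents X. exc A B V' W)}"
        using Idinv IdX by blast
    qed
    show "\<forall>U\<in>E'. \<forall>V. V \<subseteq> U \<longrightarrow> V \<in> E'" unfolding E'_def by blast
    show "\<forall>U\<in>E'. \<forall>V\<in>E'. U \<union> V \<in> E'"
    proof (intro ballI)
      fix U V assume "U \<in> E'" "V \<in> E'"
      then obtain U' V' W1 W2 where h: "U' \<in> ents X" "invariant_ent G \<phi> U'" "U \<subseteq> U'" "W1 \<in> ents X" "exc A B U' W1"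
        "V' \<in> ents X" "invariant_ent G \<phi> V'" "V \<subseteq> V'" "W2 \<in> ents X" "exc A B V' W2"
        unfolding E'_def by blast
      have "U' \<union> V' \<in> ents X" "W1 \<union> W2 \<in> ents X" using h csd by blast+
      moreover have "invariant_ent G \<phi> (U' \<union> V')" using h unfolding invariant_ent_def by blast
      moreover have "exc A B (U' \<union> V') (W1 \<union> W2)" using exc_un h by blast
      ultimately show "U \<union> V \<in> E'" unfolding E'_def using h by blast
    qed
    show "\<forall>U\<in>E'. converse U \<in> E'"
    proof (intro ballI)
      fix U assume "U \<in> E'"
      then obtain U' W1 where h: "U' \<in> ents X" "invariant_ent G \<phi> U'" "U \<subseteq> U'" "W1 \<in> ents X" "exc A B U' W1"
        unfolding E'_def by blast
      have "converse U' \<in> ents X" using h csd by blast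
      moreover have "converse U' O W1 \<in> ents X" using h csd calculation by blast
      moreover have "invariant_ent G \<phi> (converse U')" using h(2) unfolding invariant_ent_def by blast
      moreover have "exc A B (converse U') (converse U' O W1)" using exc_conv h by blast
      ultimately show "converse U \<in> E'" unfolding E'_def using h by blast
    qed
    show "\<forall>U\<in>E'. \<forall>V\<in>E'. U O V \<in> E'"
    proof (intro ballI)
      fix U V assume "U \<in> E'" "V \<in> E'"
      then obtain U' V' W1 W2 where h: "U' \<in> ents X" "invariant_ent G \<phi> U'" "U \<subseteq> U'" "W1 \<in> ents X" "exc A B U' W1"
        "V' \<in> ents X" "invariant_ent G \<phi> V'" "V \<subseteq> V'" "W2 \<in> ents X" "exc A B V' W2"
        unfolding E'_def by blast
      have "U' O V' \<in> ents X" using h csd by blast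
      moreover have "U' O W2 \<in> ents X" using h csd by blast
      moreover have "W1 \<union> U' O W2 \<in> ents X" using h csd calculation by blast
      moreover have "invariant_ent G \<phi> (U' O V')" using h unfolding invariant_ent_def by blast
      moreover have "U' \<subseteq> (A \<union> B) \<times> (A \<union> B)" using h(1) csd assms(6) by blast
      then have "exc A B (U' O V') (W1 \<union> U' O W2)" using exc_comp h by blast
      moreover have "U O V \<subseteq> U' O V'" using h by blast
      ultimately show "U O V \<in> E'" unfolding E'_def by blast
    qed
  qed
  have ctrl: "\<And>g U. g \<in> carrier G \<Longrightarrow> U \<in> E' \<Longrightarrow> (\<lambda>(x, y). (\<phi> g x, \<phi> g y)) ` U \<in> E'"
  proof -
    fix g U assume g: "g \<in> carrier G" and "U \<in> E'"
    then obtain U' W1 where h: "U' \<in> ents X" "invariant_ent G \<phi> U'" "U \<subseteq> U'" "W1 \<in> ents X" "exc A B U' W1"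
      unfolding E'_def by blast
    have "(\<lambda>(x, y). (\<phi> g x, \<phi> g y)) ` U \<subseteq> U'" using h(2,3) g unfolding invariant_ent_def by fastforce
    then show "(\<lambda>(x, y). (\<phi> g x, \<phi> g y)) ` U \<in> E'" unfolding E'_def using h by blast
  qed
  have GZ: "G_bc_space G \<phi> Z"
    unfolding G_bc_space_def
  proof (intro conjI)
    show "group G" by fact
    show "bornological_coarse Z" unfolding bornological_coarse_def Z_def
      using csZ bornX compatX E'sub by auto
    show "\<forall>x\<in>pts Z. \<phi> \<one>\<^bsub>G\<^esub> x = x" using act1 unfolding Z_def by simp
    show "\<forall>g\<in>carrier G. \<forall>h\<in>carrier G. \<forall>x\<in>pts Z. \<phi> (g \<otimes>\<^bsub>G\<^esub> h) x = \<phi> g (\<phi> h x)"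
      using actm unfolding Z_def by simp
    have mor: "bc_morphism Z Z (\<phi> g)" if g: "g \<in> carrier G" for g
    proof -
      have pr: "proper X X (\<phi> g)" using GX g unfolding bc_automorphism_def bc_morphism_def by blast
      show ?thesis unfolding bc_morphism_def controlled_def
        using pr ctrl g maps unfolding Z_def proper_def by auto
    qed
    show "\<forall>g\<in>carrier G. bc_automorphism Z (\<phi> g)"
    proof
      fix g assume g: "g \<in> carrier G"
      have ig: "inv\<^bsub>G\<^esub> g \<in> carrier G" using grp g by simp
      have "\<forall>x\<in>pts Z. \<phi> (inv\<^bsub>G\<^esub> g) (\<phi> g x) = x \<and> \<phi> g (\<phi> (inv\<^bsub>G\<^esub> g) x) = x"
      proof
        fix x assume "x \<in> pts Z"
        then have x: "x \<in> pts X" unfolding Z_def by simp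
        have "\<phi> (inv\<^bsub>G\<^esub> g) (\<phi> g x) = \<phi> (inv\<^bsub>G\<^esub> g \<otimes>\<^bsub>G\<^esub> g) x" using actm ig g x by simp
        also have "\<dots> = x" using group.l_inv[OF grp g] group.r_inv[OF grp g] act1 x by simp
        finally have 1: "\<phi> (inv\<^bsub>G\<^esub> g) (\<phi> g x) = x" .
        have "\<phi> g (\<phi> (inv\<^bsub>G\<^esub> g) x) = \<phi> (g \<otimes>\<^bsub>G\<^esub> inv\<^bsub>G\<^esub> g) x" using actm ig g x by simp
        also have "\<dots> = x" using group.l_inv[OF grp g] group.r_inv[OF grp g] act1 x by simp
        finally show "\<phi> (inv\<^bsub>G\<^esub> g) (\<phi> g x) = x \<and> \<phi> g (\<phi> (inv\<^bsub>G\<^esub> g) x) = x" using 1 by simp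
      qed
      then show "bc_automorphism Z (\<phi> g)" unfolding bc_automorphism_def using mor g ig by blast
    qed
    show "\<forall>U\<in>ents Z. \<exists>V\<in>ents Z. invariant_ent G \<phi> V \<and> U \<subseteq> V"
    proof
      fix U assume "U \<in> ents Z"
      then have "U \<in> E'" unfolding Z_def by simp
      then obtain U' W1 where h: "U' \<in> ents X" "invariant_ent G \<phi> U'" "U \<subseteq> U'" "W1 \<in> ents X" "exc A B U' W1"
        unfolding E'_def by blast
      have "U' \<in> E'" unfolding E'_def using h by blast
      then show "\<exists>V\<in>ents Z. invariant_ent G \<phi> V \<and> U \<subseteq> V" unfolding Z_def using h by auto
    qed
  qed
  have incl: "G_morphism G \<phi> (induced X C) \<phi> Z id" if C: "C \<subseteq> pts X" "invariant_set G \<phi> C"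
     and CAB: "C = A \<or> C = B" for C
  proof -
    have "controlled (induced X C) Z id"
      unfolding controlled_def
    proof
      fix U assume "U \<in> ents (induced X C)"
      then obtain U0 where U0: "U0 \<in> ents X" "U = U0 \<inter> (C \<times> C)" unfolding induced_def by auto
      obtain U' where U': "U' \<in> ents X" "invariant_ent G \<phi> U'" "U0 \<subseteq> U'" using cof U0 by blast
      have i: "invariant_ent G \<phi> (U' \<inter> (C \<times> C))" using U'(2) C(2)
        unfolding invariant_ent_def invariant_set_def by blast
      have e: "U' \<inter> (C \<times> C) \<in> ents X" using U' csd by blast
      have w: "U' \<union> Id_on (pts X) \<in> ents X" using U' IdX csd by blast
      have x: "exc A B (U' \<inter> (C \<times> C)) (U' \<union> Id_on (pts X))"
        using CAB assms(2,3) unfolding exc_def by blast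
      have "(\<lambda>(x, y). (id x, id y)) ` U = U" by auto
      then show "(\<lambda>(x, y). (id x, id y)) ` U \<in> ents Z"
        unfolding Z_def E'_def using U0 U' i e w x by auto
    qed
    moreover have "proper (induced X C) Z id"
      unfolding proper_def Z_def induced_def by auto
    moreover have "id \<in> pts (induced X C) \<rightarrow> pts Z" using C unfolding induced_def Z_def by auto
    ultimately show ?thesis unfolding G_morphism_def bc_morphism_def equivariant_def by simp
  qed
  have "\<exists>h. G_morphism G \<phi> X \<phi> Z h \<and> (\<forall>x\<in>A. h x = id x) \<and> (\<forall>x\<in>B. h x = id x)"
    using assms(7) GZ incl[of A] incl[of B] assms(2-5) unfolding is_pushout_GBC_def by blast
  then obtain h where h: "G_morphism G \<phi> X \<phi> Z h" "\<forall>x\<in>pts X. h x = x" using assms(6) by auto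
  have exc_ent: "\<exists>V\<in>ents X. ent_img U A \<inter> ent_img U B \<subseteq> ent_img V (A \<inter> B)" if U: "U \<in> ents X" for U
  proof -
    have "(\<lambda>(x, y). (h x, h y)) ` U \<in> E'" using h(1) U unfolding G_morphism_def bc_morphism_def controlled_def Z_def by auto
    moreover have "(\<lambda>(x, y). (h x, h y)) ` U = U"
    proof -
      have "U \<subseteq> pts X \<times> pts X" using U csd by blast
      then have "\<forall>p\<in>U. (\<lambda>(x, y). (h x, h y)) p = p" using h(2) by auto
      then have "(\<lambda>(x, y). (h x, h y)) ` U = id ` U" by (intro image_cong) auto
      then show ?thesis by simp
    qed
    ultimately have "U \<in> E'" by simp
    then obtain U' W1 where hh: "U' \<in> ents X" "invariant_ent G \<phi> U'" "U \<subseteq> U'" "W1 \<in> ents X" "exc A B U' W1"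
      unfolding E'_def by blast
    have "ent_img U A \<inter> ent_img U B \<subseteq> ent_img W1 (A \<inter> B)"
    proof
      fix x assume "x \<in> ent_img U A \<inter> ent_img U B"
      then obtain a b where ab: "a \<in> A" "b \<in> B" "(x,a) \<in> U" "(x,b) \<in> U" unfolding ent_img_def by blast
      have "x \<in> A \<union> B" using ab U csd assms(6) by blast
      then show "x \<in> ent_img W1 (A \<inter> B)" using hh(3,5) ab unfolding exc_def ent_img_def by blast
    qed
    then show ?thesis using hh by blast
  qed
  show ?thesis unfolding coarsely_excisive_def using assms exc_ent by blast
qed

end
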